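(* Let $X$ be a compact metric space with metric $d$ and let $f\colon X\to X$ be a continuous map. If $f$ has the $L$-Lipschitz shadowing property for some $0<L<1/2$, then $CR(f)=\overline{Per(f)}$.
   Context: For $\delta>0$, a sequence $(x_i)_{i\ge0}$ in $X$ is a $\delta$-pseudo orbit of $f$ if $d(f(x_i),x_{i+1})\le\delta$ for all $i\ge0$; it is $\epsilon$-shadowed by $x$ if $d(f^i(x),x_i)\le\epsilon$ for all $i\ge0$. For $L>0$, $f$ has the $L$-Lipschitz shadowing property if there is $\delta_0>0$ such that for every $0<\delta\le\delta_0$, every $\delta$-pseudo orbit of $f$ is $L\delta$-shadowed by some point of $X$. A $\delta$-chain is a finite sequence $(x_i)_{i=0}^k$, $k\ge1$, with $d(f(x_i),x_{i+1})\le\delta$ for $0\le i\le k-1$; it is a $\delta$-cycle if $x_0=x_k$. $CR(f)$ is the set of $x\in X$ such that for every $\delta>0$ there is a $\delta$-cycle $(x_i)_{i=0}^k$ with $x_0=x_k=x$. $Per(f)=\bigcup_{i>0}\{x\in X: f^i(x)=x\}$. *)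

theory Defs
  imports "HOL-Analysis.Analysis"
begin

definition pseudo_orbit :: "'a::metric_space set \<Rightarrow> ('a \<Rightarrow> 'a) \<Rightarrow> real \<Rightarrow> (nat \<Rightarrow> 'a) \<Rightarrow> bool" where
  "pseudo_orbit X f \<delta> xs \<longleftrightarrow> (\<forall>i. xs i \<in> X) \<and> (\<forall>i. dist (f (xs i)) (xs (Suc i)) \<le> \<delta>)"

definition shadows :: "('a::metric_space \<Rightarrow> 'a) \<Rightarrow> real \<Rightarrow> 'a \<Rightarrow> (nat \<Rightarrow> 'a) \<Rightarrow> bool" where
  "shadows f \<epsilon> x xs \<longleftrightarrow> (\<forall>i. dist ((f ^^ i) x) (xs i) \<le> \<epsilon>)"

definition lipschitz_shadowing :: "'a::metric_space set \<Rightarrow> ('a \<Rightarrow> 'a) \<Rightarrow> real \<Rightarrow> bool" where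
  "lipschitz_shadowing X f L \<longleftrightarrow>
     (\<exists>\<delta>0>0. \<forall>\<delta>. 0 < \<delta> \<and> \<delta> \<le> \<delta>0 \<longrightarrow>
        (\<forall>xs. pseudo_orbit X f \<delta> xs \<longrightarrow> (\<exists>x\<in>X. shadows f (L * \<delta>) x xs)))"

definition chain_recurrent_set :: "'a::metric_space set \<Rightarrow> ('a \<Rightarrow> 'a) \<Rightarrow> 'a set" where
  "chain_recurrent_set X f = {x \<in> X. \<forall>\<delta>>0. \<exists>k::nat. \<exists>xs::nat \<Rightarrow> 'a. k \<ge> 1 \<and>
      (\<forall>i\<le>k. xs i \<in> X) \<and> xs 0 = x \<and> xs k = x \<and>
      (\<forall>i<k. dist (f (xs i)) (xs (Suc i)) \<le> \<delta>)}"

definition periodic_points :: "'a set \<Rightarrow> ('a \<Rightarrow> 'a) \<Rightarrow> 'a set" where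
  "periodic_points X f = {x \<in> X. \<exists>i>0. (f ^^ i) x = x}"

end

theory Submission
  imports Defs
begin

lemma funpow_in:
  assumes "f ` X \<subseteq> X" "y \<in> X" shows "(f ^^ j) y \<in> X"
  using assms by (induction j) auto

lemma contin_funpow:
  assumes "f ` X \<subseteq> X" "continuous_on X f" shows "continuous_on X (f ^^ j)"
proof (induction j)
  case 0 then show ?case by (simp add: continuous_on_id)
next
  case (Suc j)
  have "f ^^ Suc j = f \<circ> (f ^^ j)" by simp
  moreover have "(f ^^ j) ` X \<subseteq> X" using funpow_in[OF assms(1)] by blast
  ultimately show ?case using continuous_on_compose[OF Suc] continuous_on_subset[OF assms(2)]
    by metis
qed

lemma step_lemma:
  fixes X :: "'a::metric_space set"
  assumes sh: "\<forall>xs. pseudo_orbit X f e xs \<longrightarrow> (\<exists>z\<in>X. shadows f (L * e) z xs)"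
    and fX: "f ` X \<subseteq> X" and yX: "y \<in> X" and k: "k \<ge> 1"
    and d: "dist ((f ^^ k) y) y \<le> e" and e: "0 \<le> e"
  shows "\<exists>y'\<in>X. dist y' y \<le> L * e \<and> dist ((f ^^ k) y') y' \<le> 2 * L * e"
proof -
  define xi where "xi i = (f ^^ (i mod k)) y" for i
  have po: "pseudo_orbit X f e xi"
    unfolding pseudo_orbit_def
  proof safe
    fix i show "xi i \<in> X" unfolding xi_def using funpow_in[OF fX yX] .
  next
    fix i
    show "dist (f (xi i)) (xi (Suc i)) \<le> e"
    proof (cases "Suc (i mod k) = k")
      case True
      then have "f (xi i) = (f ^^ k) y" unfolding xi_def by (metis comp_apply funpow.simps(2))
      moreover have "xi (Suc i) = y" unfolding xi_def using True by (simp add: mod_Suc)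
      ultimately show ?thesis using d by simp
    next
      case False
      then have "xi (Suc i) = (f ^^ Suc (i mod k)) y" unfolding xi_def by (simp add: mod_Suc)
      then show ?thesis unfolding xi_def using e by simp
    qed
  qed
  then obtain z where zX: "z \<in> X" and zs: "shadows f (L * e) z xi" using sh by blast
  have 1: "dist z y \<le> L * e" using zs unfolding shadows_def xi_def
    by (metis funpow_0 mod_0)
  have 2: "dist ((f ^^ k) z) y \<le> L * e" using zs unfolding shadows_def xi_def
    by (metis funpow_0 mod_self)
  have "dist ((f ^^ k) z) z \<le> dist ((f ^^ k) z) y + dist z y" by (rule dist_triangle2)
  then have "dist ((f ^^ k) z) z \<le> 2 * L * e" using 1 2 by simp
  then show ?thesis using zX 1 by blast
qed


lemma iterate_lemma:
  fixes X :: "'a::metric_space set"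
  assumes sh: "\<And>e. 0 < e \<Longrightarrow> e \<le> d0 \<Longrightarrow> \<forall>xs. pseudo_orbit X f e xs \<longrightarrow> (\<exists>z\<in>X. shadows f (L * e) z xs)"
    and fX: "f ` X \<subseteq> X" and k: "k \<ge> 1"
    and L: "0 < L" "L < 1/2" and dl: "0 < \<delta>" "\<delta> \<le> d0"
    and y0X: "y0 \<in> X" and y0x: "dist y0 x \<le> L * \<delta>" and y0k: "dist ((f ^^ k) y0) y0 \<le> 2 * L * \<delta>"
  shows "\<exists>y\<in>X. dist ((f ^^ k) y) y \<le> (2*L)^(Suc n) * \<delta> \<and>
           dist y x + L * ((2*L)^(Suc n) * \<delta>) / (1 - 2*L) \<le> L * \<delta> / (1 - 2*L)"
proof (induction n)
  case 0
  have "L * \<delta> + L * (2 * L * \<delta>) / (1 - 2*L) = L * \<delta> / (1 - 2*L)"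
    using L by (simp add: field_simps)
  then show ?case using y0X y0x y0k by (intro bexI[of _ y0]) auto
next
  case (Suc n)
  then obtain y where yX: "y \<in> X" and yk: "dist ((f ^^ k) y) y \<le> (2*L)^(Suc n) * \<delta>"
    and yx: "dist y x + L * ((2*L)^(Suc n) * \<delta>) / (1 - 2*L) \<le> L * \<delta> / (1 - 2*L)" by blast
  define e where "e = (2*L)^(Suc n) * \<delta>"
  have e0: "0 < e" unfolding e_def using L dl by simp
  have "(2*L)^(Suc n) \<le> 1" using L by (intro power_le_one) auto
  then have "e \<le> \<delta>" unfolding e_def using dl mult_right_mono[of "(2*L)^(Suc n)" 1 \<delta>] by simp
  then have "e \<le> d0" using dl by simp
  then obtain y' where y'X: "y' \<in> X" and y'y: "dist y' y \<le> L * e"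
    and y'k: "dist ((f ^^ k) y') y' \<le> 2 * L * e"
    using step_lemma[OF sh[OF e0] fX yX k] yk e0 unfolding e_def by fastforce
  have eq: "L * e + L * (2 * L * e) / (1 - 2*L) = L * e / (1 - 2*L)"
    using L by (simp add: field_simps)
  have "dist y' x \<le> dist y' y + dist y x" by (rule dist_triangle)
  then have "dist y' x + L * (2 * L * e) / (1 - 2*L) \<le> L * \<delta> / (1 - 2*L)"
    using yx y'y eq unfolding e_def[symmetric] by linarith
  moreover have "2 * L * e = (2*L)^(Suc (Suc n)) * \<delta>" unfolding e_def by simp
  ultimately show ?case using y'X y'k by metis
qed


lemma per_closure_sub:
  fixes X :: "'a::metric_space set"
  assumes "compact X" and fX: "f ` X \<subseteq> X" and fc: "continuous_on X f"
  shows "closure (periodic_points X f) \<subseteq> chain_recurrent_set X f"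
proof
  fix x assume xc: "x \<in> closure (periodic_points X f)"
  have "closed X" using assms(1) by (rule compact_imp_closed)
  moreover have "periodic_points X f \<subseteq> X" unfolding periodic_points_def by auto
  ultimately have xX: "x \<in> X" using xc closure_minimal by blast
  show "x \<in> chain_recurrent_set X f"
    unfolding chain_recurrent_set_def
  proof (intro CollectI conjI allI impI xX)
    fix \<delta> :: real assume d: "\<delta> > 0"
    obtain \<eta> where eta: "\<eta> > 0" and eta2: "\<And>x'. x' \<in> X \<Longrightarrow> dist x' x < \<eta> \<Longrightarrow> dist (f x') (f x) < \<delta>/3"
      using fc xX d unfolding continuous_on_iff by (metis zero_less_divide_iff zero_less_numeral)
    obtain p where pP: "p \<in> periodic_points X f" and px: "dist p x < min \<eta> (\<delta>/3)"
      using xc eta d unfolding closure_approachable by (metis min_less_iff_conj zero_less_divide_iff zero_less_numeral)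
    obtain n where pX: "p \<in> X" and n: "n > 0" and pn: "(f ^^ n) p = p" using pP unfolding periodic_points_def by auto
    have fpx: "dist (f p) (f x) < \<delta>/3" using eta2[OF pX] px by simp
    define xs where "xs i = (if i = 0 \<or> i = n then x else (f ^^ i) p)" for i
    have "n \<ge> 1 \<and> (\<forall>i\<le>n. xs i \<in> X) \<and> xs 0 = x \<and> xs n = x \<and>
      (\<forall>i<n. dist (f (xs i)) (xs (Suc i)) \<le> \<delta>)"
    proof (intro conjI allI impI)
      show "n \<ge> 1" using n by simp
      show "xs 0 = x" "xs n = x" unfolding xs_def by auto
    next
      fix i show "xs i \<in> X" unfolding xs_def using xX funpow_in[OF fX pX] by auto
    next
      fix i assume i: "i < n"
      show "dist (f (xs i)) (xs (Suc i)) \<le> \<delta>"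
      proof (cases "i = 0")
        case True
        show ?thesis
        proof (cases "n = 1")
          case True
          then have "f p = p" using pn by simp
          have "dist (f x) x \<le> dist (f x) (f p) + dist (f p) x" by (rule dist_triangle)
          moreover have "dist (f x) (f p) < \<delta>/3" using fpx by (simp add: dist_commute)
          moreover have "dist (f p) x < \<delta>/3" using px \<open>f p = p\<close> by simp
          ultimately have "dist (f x) x < \<delta>" using d by linarith
          then show ?thesis using True \<open>i = 0\<close> unfolding xs_def by simp
        next
          case False
          then have "xs (Suc i) = f p" using \<open>i = 0\<close> unfolding xs_def by simp
          moreover have "xs i = x" using \<open>i = 0\<close> unfolding xs_def by simp
          moreover have "dist (f x) (f p) < \<delta>/3" using fpx by (simp add: dist_commute)
          ultimately show ?thesis using d by simp
        qed
      next
        case False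
        then have xi: "xs i = (f ^^ i) p" using i unfolding xs_def by simp
        show ?thesis
        proof (cases "Suc i = n")
          case True
          then have "f (xs i) = p" using xi pn by (metis comp_apply funpow.simps(2))
          moreover have "xs (Suc i) = x" using True unfolding xs_def by simp
          moreover have "dist p x < \<delta>/3" using px by simp
          ultimately show ?thesis using d by simp
        next
          case False
          then show ?thesis using xi unfolding xs_def using d by simp
        qed
      qed
    qed
    then show "\<exists>k xs. 1 \<le> k \<and> (\<forall>i\<le>k. xs i \<in> X) \<and> xs 0 = x \<and> xs k = x \<and>
      (\<forall>i<k. dist (f (xs i)) (xs (Suc i)) \<le> \<delta>)" by blast
  qed
qed


lemma cr_sub_closure:
  fixes X :: "'a::metric_space set"
  assumes cX: "compact X" and fX: "f ` X \<subseteq> X" and fc: "continuous_on X f"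
    and L: "0 < L" "L < 1/2" and ls: "lipschitz_shadowing X f L"
  shows "chain_recurrent_set X f \<subseteq> closure (periodic_points X f)"
proof
  fix x assume xcr: "x \<in> chain_recurrent_set X f"
  obtain d0 where d0: "d0 > 0" and sh: "\<And>e. 0 < e \<Longrightarrow> e \<le> d0 \<Longrightarrow>
      \<forall>xs. pseudo_orbit X f e xs \<longrightarrow> (\<exists>z\<in>X. shadows f (L * e) z xs)"
    using ls unfolding lipschitz_shadowing_def by blast
  show "x \<in> closure (periodic_points X f)"
    unfolding closure_approachable_le
  proof (intro allI impI)
    fix \<epsilon> :: real assume eps: "\<epsilon> > 0"
    define \<delta> where "\<delta> = min d0 (\<epsilon> * (1 - 2*L) / L)"
    have dpos: "\<delta> > 0" unfolding \<delta>_def using d0 eps L by simp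
    have dle: "\<delta> \<le> d0" unfolding \<delta>_def by simp
    have "\<delta> \<le> \<epsilon> * (1 - 2*L) / L" unfolding \<delta>_def by simp
    then have "L * \<delta> \<le> \<epsilon> * (1 - 2*L)" using L by (simp add: field_simps)
    then have bnd: "L * \<delta> / (1 - 2*L) \<le> \<epsilon>" using L by (simp add: field_simps)
    obtain k xs where k: "k \<ge> 1" and xsX: "\<forall>i\<le>k. xs i \<in> X" and xs0: "xs 0 = x" and xsk: "xs k = x"
      and xsd: "\<forall>i<k. dist (f (xs i)) (xs (Suc i)) \<le> \<delta>"
      using xcr dpos unfolding chain_recurrent_set_def by blast
    define xi where "xi i = xs (i mod k)" for i
    have po: "pseudo_orbit X f \<delta> xi"
      unfolding pseudo_orbit_def
    proof safe
      fix i show "xi i \<in> X" unfolding xi_def using xsX k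
        by (metis less_imp_le_nat mod_less_divisor not_one_le_zero neq0_conv)
    next
      fix i
      have ik: "i mod k < k" using k by simp
      show "dist (f (xi i)) (xi (Suc i)) \<le> \<delta>"
      proof (cases "Suc (i mod k) = k")
        case True
        then have "xi (Suc i) = xs (Suc (i mod k))" unfolding xi_def using xs0 xsk by (simp add: mod_Suc)
        then show ?thesis unfolding xi_def using xsd ik by simp
      next
        case False
        then have "xi (Suc i) = xs (Suc (i mod k))" unfolding xi_def by (simp add: mod_Suc)
        then show ?thesis unfolding xi_def using xsd ik by simp
      qed
    qed
    then obtain y0 where y0X: "y0 \<in> X" and y0s: "shadows f (L * \<delta>) y0 xi" using sh[OF dpos dle] by blast
    have y0x: "dist y0 x \<le> L * \<delta>" using y0s xs0 unfolding shadows_def xi_def by (metis funpow_0 mod_0)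
    have y0kx: "dist ((f ^^ k) y0) x \<le> L * \<delta>" using y0s xs0 unfolding shadows_def xi_def by (metis mod_self)
    have "dist ((f ^^ k) y0) y0 \<le> dist ((f ^^ k) y0) x + dist y0 x" by (rule dist_triangle2)
    then have y0k: "dist ((f ^^ k) y0) y0 \<le> 2 * L * \<delta>" using y0x y0kx by simp
    have "\<forall>n. \<exists>y\<in>X. dist ((f ^^ k) y) y \<le> (2*L)^(Suc n) * \<delta> \<and>
           dist y x + L * ((2*L)^(Suc n) * \<delta>) / (1 - 2*L) \<le> L * \<delta> / (1 - 2*L)"
      using iterate_lemma[OF sh fX k L dpos dle y0X y0x y0k] by blast
    then obtain Y where YX: "\<And>n. Y n \<in> X" and Yk: "\<And>n. dist ((f ^^ k) (Y n)) (Y n) \<le> (2*L)^(Suc n) * \<delta>"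
      and Yx0: "\<And>n. dist (Y n) x + L * ((2*L)^(Suc n) * \<delta>) / (1 - 2*L) \<le> L * \<delta> / (1 - 2*L)"
      by metis
    have Yx: "dist (Y n) x \<le> L * \<delta> / (1 - 2*L)" for n
    proof -
      have "0 \<le> L * ((2*L)^(Suc n) * \<delta>) / (1 - 2*L)" using L dpos by simp
      then show ?thesis using Yx0[of n] by linarith
    qed
    obtain l r where lX: "l \<in> X" and r: "strict_mono r" and lim: "(Y \<circ> r) \<longlonglongrightarrow> l"
      using compact_imp_seq_compact[OF cX] YX unfolding seq_compact_def by metis
    have c1: "((\<lambda>n. (f ^^ k) ((Y \<circ> r) n)) \<longlonglongrightarrow> (f ^^ k) l)"
      using continuous_on_tendsto_compose[OF contin_funpow[OF fX fc] lim lX] YX by simp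
    have c2: "((\<lambda>n. dist ((f ^^ k) ((Y \<circ> r) n)) ((Y \<circ> r) n)) \<longlonglongrightarrow> dist ((f ^^ k) l) l)"
      by (intro tendsto_dist c1 lim)
    have p0: "(\<lambda>n. (2*L)^(Suc n) * \<delta>) \<longlonglongrightarrow> 0"
    proof -
      have "(\<lambda>n. (2*L)^n) \<longlonglongrightarrow> 0" using L by (intro LIMSEQ_power_zero) auto
      then have "(\<lambda>n. (2*L) * (2*L)^n * \<delta>) \<longlonglongrightarrow> (2*L) * 0 * \<delta>"
        by (intro tendsto_mult tendsto_const)
      then show ?thesis by simp
    qed
    have p1: "(\<lambda>n. (2*L)^(Suc (r n)) * \<delta>) \<longlonglongrightarrow> 0"
      using LIMSEQ_subseq_LIMSEQ[OF p0 r] by (simp add: comp_def)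
    have c3: "((\<lambda>n. dist ((f ^^ k) ((Y \<circ> r) n)) ((Y \<circ> r) n)) \<longlonglongrightarrow> 0)"
    proof (rule tendsto_sandwich[OF _ _ tendsto_const p1])
      have "\<forall>n. dist ((f ^^ k) ((Y \<circ> r) n)) ((Y \<circ> r) n) \<le> (2*L)^(Suc (r n)) * \<delta>"
        using Yk by (simp only: comp_apply) simp
      then show "\<forall>\<^sub>F n in sequentially. dist ((f ^^ k) ((Y \<circ> r) n)) ((Y \<circ> r) n) \<le> (2*L)^(Suc (r n)) * \<delta>"
        by (rule always_eventually)
    qed auto
    have fixl: "(f ^^ k) l = l" using LIMSEQ_unique[OF c2 c3] by simp
    have "(\<lambda>n. dist ((Y \<circ> r) n) x) \<longlonglongrightarrow> dist l x" by (intro tendsto_dist lim tendsto_const)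
    then have "dist l x \<le> L * \<delta> / (1 - 2*L)"
      by (rule tendsto_upperbound) (auto simp: Yx)
    then have "dist l x \<le> \<epsilon>" using bnd by simp
    moreover have "l \<in> periodic_points X f" unfolding periodic_points_def using lX fixl k by (auto intro!: exI[of _ k])
    ultimately show "\<exists>y\<in>periodic_points X f. dist y x \<le> \<epsilon>" by blast
  qed
qed

theorem theorem1p2:
  fixes X :: "'a::metric_space set" and f :: "'a \<Rightarrow> 'a" and L :: real
  assumes "compact X"
    and "f ` X \<subseteq> X"
    and "continuous_on X f"
    and "0 < L" and "L < 1/2"
    and "lipschitz_shadowing X f L"
  shows "chain_recurrent_set X f = closure (periodic_points X f)"
  using cr_sub_closure[OF assms] per_closure_sub[OF assms(1-3)] by blast

end
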